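(* Let $S_1,S_2$ be numerical semigroups and $a_1,a_2$ coprime positive integers with $a_2\in S_1$ and $a_1\in S_2$, and let $S=a_1S_1+a_2S_2$. For $i=1,2$ put $Q_i(x)=\mathrm P_S(x)/\mathrm P_{S_i}(x^{a_i})$. Then $Q_i(0)=1$, $Q_i(x)$ is a monic polynomial, and its nonzero coefficients alternate between $1$ and $-1$.
   Context: A numerical semigroup is a submonoid of $(\mathbb N,+)$ with finite complement in $\mathbb N$; $aA=\{ax:x\in A\}$, $A+B=\{x+y:x\in A,y\in B\}$. For a numerical semigroup $T$, $\mathrm P_T(x)=(1-x)\sum_{t\in T}x^t$. (In the paper, $S$ is called the gluing $a_1S_1+_{a_1a_2}a_2S_2$.) *)

theory Defs
  imports "HOL-Computational_Algebra.Computational_Algebra"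
begin

definition numerical_semigroup :: "nat set \<Rightarrow> bool" where
  "numerical_semigroup T \<longleftrightarrow>
     0 \<in> T \<and> (\<forall>x\<in>T. \<forall>y\<in>T. x + y \<in> T) \<and> finite (UNIV - T)"

definition semigroup_P :: "nat set \<Rightarrow> real fps" where
  "semigroup_P T = (1 - fps_X) * Abs_fps (\<lambda>n. if n \<in> T then 1 else 0)"

definition gluing :: "nat \<Rightarrow> nat set \<Rightarrow> nat \<Rightarrow> nat set \<Rightarrow> nat set" where
  "gluing a1 S1 a2 S2 = {a1 * s1 + a2 * s2 | s1 s2. s1 \<in> S1 \<and> s2 \<in> S2}"

definition alternating_coeffs :: "real poly \<Rightarrow> bool" where
  "alternating_coeffs q \<longleftrightarrow>
     (\<forall>j. coeff q j \<noteq> 0 \<longrightarrow> coeff q j = 1 \<or> coeff q j = -1) \<and>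
     (\<forall>j k. j < k \<and> coeff q j \<noteq> 0 \<and> coeff q k \<noteq> 0 \<and>
            (\<forall>m. j < m \<and> m < k \<longrightarrow> coeff q m = 0) \<longrightarrow> coeff q k = - coeff q j)"

end

theory Submission
  imports Defs "HOL-Number_Theory.Cong"
begin

definition H :: "nat set \<Rightarrow> real fps" where
  "H T = Abs_fps (\<lambda>n. if n \<in> T then 1 else 0)"

lemma semigroup_P_H: "semigroup_P T = (1 - fps_X) * H T"
  by (simp add: semigroup_P_def H_def)

lemma semigroup_P_nth:
  "semigroup_P M $ n = (if n \<in> M then 1 else 0) - (if n > 0 \<and> n - 1 \<in> M then 1 else 0 :: real)"
proof -
  have "semigroup_P M = H M - fps_X^1 * H M" by (simp add: semigroup_P_H algebra_simps)
  then show ?thesis by (simp only: fps_sub_nth fps_X_power_mult_nth) (auto simp: H_def)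
qed

lemma partA:
  assumes M0: "0 \<in> M" and fin: "finite (UNIV - M)"
  shows "\<exists>q. fps_of_poly q = semigroup_P M \<and> poly q 0 = 1 \<and> lead_coeff q = 1 \<and> alternating_coeffs q"
proof -
  define c where "c n = (if n \<in> M then 1 else 0) - (if n > 0 \<and> n - 1 \<in> M then 1 else 0 :: real)" for n
  have Pn: "semigroup_P M $ n = c n" for n by (simp add: semigroup_P_nth c_def)
  obtain N where N: "\<forall>n\<in>UNIV - M. n < N" using fin finite_nat_set_iff_bounded by blast
  have ex: "\<exists>L. \<forall>m\<ge>L. m \<in> M" using N by (meson DiffI UNIV_I not_le)
  define L where "L = (LEAST L. \<forall>m\<ge>L. m \<in> M)"
  have hL: "\<forall>m\<ge>L. m \<in> M" unfolding L_def using ex by (rule LeastI_ex)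
  have hL2: "L - 1 \<notin> M" if "L > 0"
  proof
    assume a: "L - 1 \<in> M"
    have "\<forall>m\<ge>L - 1. m \<in> M" using a hL by (metis Suc_pred' le_antisym not_less_eq_eq that)
    then have "L \<le> L - 1" unfolding L_def by (rule Least_le)
    with that show False by simp
  qed
  have cL: "c L = 1"
  proof (cases "L = 0")
    case True then show ?thesis using M0 by (simp add: c_def)
  next
    case False then show ?thesis using hL hL2 by (simp add: c_def)
  qed
  have cgt: "c n = 0" if "n > L" for n using hL that by (simp add: c_def)
  define q where "q = Poly (map c [0..<Suc L])"
  have cq: "coeff q n = c n" for n
  proof (cases "n < Suc L")
    case True then show ?thesis by (simp add: q_def nth_default_def del: upt_Suc)
  next
    case False then show ?thesis using cgt[of n] by (simp add: q_def nth_default_def)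
  qed
  have fq: "fps_of_poly q = semigroup_P M"
    by (rule fps_ext) (simp add: cq Pn)
  have dq: "degree q = L"
  proof (rule antisym)
    show "degree q \<le> L" by (rule degree_le) (simp add: cq cgt)
    show "L \<le> degree q" by (rule le_degree) (simp add: cq cL)
  qed
  have lc: "lead_coeff q = 1" using dq cq cL by simp
  have p0: "poly q 0 = 1" using cq[of 0] M0 by (simp add: poly_0_coeff_0 c_def)
  have alt: "alternating_coeffs q"
    unfolding alternating_coeffs_def cq
  proof (intro conjI allI impI)
    fix j show "c j = 1 \<or> c j = -1" if "c j \<noteq> 0" using that unfolding c_def by (cases "j = 0") (auto split: if_splits)
  next
    fix j k assume a: "j < k \<and> c j \<noteq> 0 \<and> c k \<noteq> 0 \<and> (\<forall>m. j < m \<and> m < k \<longrightarrow> c m = 0)"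
    have st: "j + d < k \<Longrightarrow> (j + d \<in> M \<longleftrightarrow> j \<in> M)" for d
    proof (induction d)
      case 0 then show ?case by simp
    next
      case (Suc d)
      have "c (j + Suc d) = 0" using a Suc.prems by auto
      then have "(j + Suc d \<in> M) = (j + d \<in> M)" by (auto simp: c_def split: if_splits)
      then show ?case using Suc by simp
    qed
    have "k - 1 \<in> M \<longleftrightarrow> j \<in> M" using st[of "k - 1 - j"] a by simp
    then show "c k = - c j" using a by (auto simp: c_def split: if_splits)
  qed
  show ?thesis using fq p0 lc alt by blast
qed

lemma compose_Xpow_nth:
  assumes "a > 0"
  shows "((f::real fps) oo fps_X ^ a) $ n = (if a dvd n then f $ (n div a) else 0)"
proof -
  have eq: "(n = a * i) \<longleftrightarrow> (a dvd n \<and> i = n div a)" for i using assms by auto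
  have "(f oo fps_X ^ a) $ n = (\<Sum>i\<in>{0..n}. f $ i * (if n = a * i then 1 else 0))"
    by (simp add: fps_compose_nth power_mult[symmetric])
  also have "\<dots> = (\<Sum>i\<in>{0..n}. if i = n div a then (if a dvd n then f $ i else 0) else 0)"
    by (rule sum.cong) (auto simp: eq)
  also have "\<dots> = (if a dvd n then f $ (n div a) else 0)"
    by (simp add: sum.delta)
  finally show ?thesis .
qed

lemma mem_gluing: "x \<in> gluing a1 S1 a2 S2 \<longleftrightarrow> (\<exists>s1 s2. x = a1*s1 + a2*s2 \<and> s1 \<in> S1 \<and> s2 \<in> S2)"
  unfolding gluing_def by blast

lemma gluing_commute: "gluing a1 S1 a2 S2 = gluing a2 S2 a1 S1"
  unfolding gluing_def by (auto simp: add.commute)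

lemma ns_mult: assumes "numerical_semigroup T" "a \<in> T" shows "m * a \<in> T"
  using assms by (induction m) (auto simp: numerical_semigroup_def)

lemma main:
  fixes S1 S2 :: "nat set" and a1 a2 :: nat
  assumes ns1: "numerical_semigroup S1" and ns2: "numerical_semigroup S2"
    and p1: "a1 > 0" and p2: "a2 > 0" and cop: "coprime a1 a2"
    and a2S1: "a2 \<in> S1" and a1S2: "a1 \<in> S2"
  shows "\<exists>q :: real poly.
             fps_of_poly q = semigroup_P (gluing a1 S1 a2 S2) / (semigroup_P S1 oo (fps_X ^ a1))
             \<and> poly q 0 = 1 \<and> lead_coeff q = 1 \<and> alternating_coeffs q"
proof -
  define S where "S = gluing a1 S1 a2 S2"
  define M where "M = gluing a1 UNIV a2 S2"
  define E where "E = {e. e \<in> M \<and> \<not> (a1 \<le> e \<and> e - a1 \<in> M)}"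
  have memM: "x \<in> M \<longleftrightarrow> (\<exists>k s. x = a1*k + a2*s \<and> s \<in> S2)" for x
    unfolding M_def mem_gluing by blast
  have memS: "x \<in> S \<longleftrightarrow> (\<exists>s1 s2. x = a1*s1 + a2*s2 \<and> s1 \<in> S1 \<and> s2 \<in> S2)" for x
    unfolding S_def mem_gluing by blast
  have S20: "0 \<in> S2" and S10: "0 \<in> S1" using ns1 ns2 by (auto simp: numerical_semigroup_def)
  have S1add: "x \<in> S1 \<Longrightarrow> y \<in> S1 \<Longrightarrow> x + y \<in> S1" for x y
    using ns1 by (auto simp: numerical_semigroup_def)
  have M0: "0 \<in> M" using S20 memM by force
  have Madd: "n \<in> M \<Longrightarrow> n + a1 * t \<in> M" for n t
  proof -
    assume "n \<in> M"
    then obtain k s where "n = a1*k + a2*s" "s \<in> S2" using memM by blast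
    then have "n + a1 * t = a1 * (k + t) + a2 * s" by (simp add: algebra_simps)
    then show ?thesis using \<open>s \<in> S2\<close> memM by blast
  qed
  have Euniq: "e = e'" if "e \<in> E" "e' \<in> E" "e mod a1 = e' mod a1" for e e'
  proof (rule ccontr)
    have gen: "False" if "x \<in> E" "y \<in> E" "x mod a1 = y mod a1" "x < y" for x y
    proof -
      have "a1 dvd y - x" using that mod_eq_dvd_iff_nat[of x y a1] by simp
      then obtain t where t: "y - x = a1 * t" by blast
      have "t > 0" using t that(4) by (cases t) auto
      have "y - a1 = x + a1 * (t - 1)" using t \<open>t > 0\<close> that(4)
        by (cases t) (auto simp: algebra_simps)
      moreover have "a1 \<le> y" using t \<open>t > 0\<close> that(4)
        by (metis le_add_diff_inverse2 less_imp_le_nat mult.commute mult_le_mono2 nat_mult_1_right not_less_eq_eq plus_1_eq_Suc trans_le_add1 zero_less_iff_neq_zero Suc_leI)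
      ultimately show False using that(1,2) Madd[of x "t - 1"] unfolding E_def by auto
    qed
    assume "e \<noteq> e'"
    then show False using gen[of e e'] gen[of e' e] that by (cases "e < e'") auto
  qed
  have Eform: "\<exists>s\<in>S2. e = a2 * s" if eE: "e \<in> E" for e
  proof -
    obtain k s where ks: "e = a1*k + a2*s" "s \<in> S2" using eE memM unfolding E_def by blast
    show ?thesis
    proof (cases k)
      case 0 then show ?thesis using ks by auto
    next
      case (Suc k')
      have "e - a1 = a1 * k' + a2 * s" "a1 \<le> e" using ks Suc by auto
      then have "e - a1 \<in> M" "a1 \<le> e" using ks memM by blast+
      then show ?thesis using eE unfolding E_def by blast
    qed
  qed
  have Schar: "n \<in> S \<longleftrightarrow> (\<exists>k\<in>S1. a1*k \<le> n \<and> n - a1*k \<in> E)" for n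
  proof
    assume "\<exists>k\<in>S1. a1*k \<le> n \<and> n - a1*k \<in> E"
    then obtain k where k: "k \<in> S1" "a1*k \<le> n" "n - a1*k \<in> E" by blast
    obtain s where "s \<in> S2" "n - a1*k = a2*s" using Eform k(3) by blast
    then have "n = a1*k + a2*s" using k(2) by simp
    then show "n \<in> S" using memS k(1) \<open>s \<in> S2\<close> by blast
  next
    assume "n \<in> S"
    define P where "P s2 = (\<exists>s1\<in>S1. s2 \<in> S2 \<and> n = a1*s1 + a2*s2)" for s2
    have exP: "\<exists>s2. P s2" using \<open>n \<in> S\<close> memS P_def by blast
    define s2 where "s2 = (LEAST s. P s)"
    have "P s2" unfolding s2_def using exP by (rule LeastI_ex)
    then obtain s1 where s1: "s1 \<in> S1" "s2 \<in> S2" "n = a1*s1 + a2*s2" unfolding P_def by blast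
    have inE: "a2 * s2 \<in> E"
    proof -
      have inM: "a2 * s2 \<in> M" using memM s1(2) by (metis add_0 mult_0_right)
      have "\<not> (a1 \<le> a2*s2 \<and> a2*s2 - a1 \<in> M)"
      proof
        assume h: "a1 \<le> a2*s2 \<and> a2*s2 - a1 \<in> M"
        then obtain j t where jt: "a2*s2 - a1 = a1*j + a2*t" "t \<in> S2" using memM by blast
        have eq1: "a2*s2 = a1*(j+1) + a2*t" using jt h by (metis add.commute add.left_commute le_add_diff_inverse mult.commute nat_mult_1_right distrib_left)
        have "a2 * t < a2 * s2" using eq1 p1 by simp
        then have ts: "t < s2" by simp
        have eq2: "a2*(s2 - t) = a1*(j+1)" using eq1 ts by (simp add: diff_mult_distrib2)
        have "a1 dvd a2 * (s2 - t)" using eq2 by simp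
        then have "a1 dvd s2 - t" using cop by (simp add: coprime_dvd_mult_right_iff)
        then obtain m where m: "s2 - t = a1 * m" by blast
        have "n = a1 * (s1 + m * a2) + a2 * t"
        proof -
          have "s2 = t + a1 * m" using m ts by simp
          then show ?thesis using s1(3) by (simp add: algebra_simps)
        qed
        moreover have "s1 + m * a2 \<in> S1" using S1add s1(1) ns_mult[OF ns1 a2S1] by blast
        ultimately have "P t" unfolding P_def using jt(2) by blast
        then have "s2 \<le> t" unfolding s2_def by (rule Least_le)
        then show False using ts by simp
      qed
      then show ?thesis using inM unfolding E_def by blast
    qed
    show "\<exists>k\<in>S1. a1*k \<le> n \<and> n - a1*k \<in> E" using s1 inE by (intro bexI[of _ s1]) auto
  qed
  have finM: "finite (UNIV - M)"
  proof -
    have "finite (UNIV - S2)" using ns2 by (simp add: numerical_semigroup_def)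
    then obtain F where F: "\<forall>n\<in>UNIV - S2. n < F" using finite_nat_set_iff_bounded by blast
    have "coprime a2 a1" using cop by (simp add: coprime_commute)
    then obtain x where x: "[a2 * x = Suc 0] (mod a1)" using cong_solve_coprime_nat by blast
    have big: "n \<in> M" if nb: "n \<ge> a2*(a1 + F*a1)" for n
    proof -
      define s where "s = (x*n) mod a1 + F*a1"
      have "F \<le> F*a1" using p1 by simp
      then have "F \<le> s" unfolding s_def by linarith
      then have sS2: "s \<in> S2" using F by (meson DiffI UNIV_I not_le)
      have "(x*n) mod a1 < a1" using p1 by simp
      then have "s \<le> a1 + F*a1" unfolding s_def by linarith
      then have sle: "a2*s \<le> n" using nb by (meson le_trans mult_le_mono2)
      have "(a2*s) mod a1 = (a2*((x*n) mod a1) + a1*(a2*F)) mod a1"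
        unfolding s_def by (simp add: algebra_simps)
      also have "\<dots> = (a2*((x*n) mod a1)) mod a1" by simp
      also have "\<dots> = (a2*(x*n)) mod a1" by (simp add: mod_mult_right_eq)
      also have "\<dots> = (((a2*x) mod a1) * n) mod a1" by (simp add: mod_mult_left_eq mult.assoc)
      also have "\<dots> = ((Suc 0 mod a1) * n) mod a1" using x by (simp add: cong_def)
      also have "\<dots> = n mod a1" by (metis mod_mult_left_eq mult_1 One_nat_def)
      finally have "n mod a1 = (a2*s) mod a1" by simp
      then have "a1 dvd n - a2*s" using mod_eq_dvd_iff_nat[OF sle] by simp
      then obtain k where "n - a2*s = a1*k" by blast
      then have "n = a1*k + a2*s" using sle by simp
      then show ?thesis using memM sS2 by blast
    qed
    have "UNIV - M \<subseteq> {..< a2*(a1 + F*a1)}" using big by (auto simp: not_le[symmetric])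
    then show ?thesis by (rule finite_subset) simp
  qed
  define K where "K = H S1 oo fps_X ^ a1"
  define D where "D = semigroup_P S1 oo fps_X ^ a1"
  have X0: "(fps_X ^ a1 :: real fps) $ 0 = 0" using p1 by simp
  have Knth: "K $ n = (if a1 dvd n \<and> n div a1 \<in> S1 then 1 else 0)" for n
    unfolding K_def compose_Xpow_nth[OF p1] by (simp add: H_def)
  have DK: "D = (1 - fps_X ^ a1) * K"
    unfolding D_def K_def semigroup_P_H fps_compose_mult_distrib[OF X0]
    by (simp add: fps_compose_sub_distrib X0 fps_X_fps_compose_startby0[OF X0])
  have HE: "(1 - fps_X ^ a1) * H M = H E"
  proof (rule fps_ext)
    fix n
    have cl: "a1 \<le> n \<Longrightarrow> n - a1 \<in> M \<Longrightarrow> n \<in> M" using Madd[of "n - a1" 1] by simp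
    have "((1 - fps_X ^ a1) * H M) $ n = (H M - fps_X ^ a1 * H M) $ n" by (simp add: algebra_simps)
    also have "\<dots> = H E $ n" unfolding fps_sub_nth fps_X_power_mult_nth
      using cl by (auto simp: H_def E_def)
    finally show "((1 - fps_X ^ a1) * H M) $ n = H E $ n" .
  qed
  have HS: "H E * K = H S"
  proof (rule fps_ext)
    fix n
    define T where "T i = (if i \<in> E \<and> a1 dvd (n - i) \<and> (n - i) div a1 \<in> S1 then 1 else 0 :: real)" for i
    have "(H E * K) $ n = (\<Sum>i=0..n. T i)"
      unfolding fps_mult_nth by (rule sum.cong) (auto simp: H_def Knth T_def)
    also have "\<dots> = H S $ n"
    proof (cases "n \<in> S")
      case True
      then obtain k where k: "k \<in> S1" "a1*k \<le> n" "n - a1*k \<in> E" using Schar by blast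
      define i0 where "i0 = n - a1*k"
      have i0n: "i0 \<le> n" unfolding i0_def by simp
      have ni0: "n - i0 = a1 * k" unfolding i0_def using k(2) by simp
      have Ti: "T i = (if i = i0 then 1 else 0)" if "i \<in> {0..n}" for i
      proof (cases "i = i0")
        case True then show ?thesis using ni0 k p1 unfolding T_def i0_def by simp
      next
        case False
        have "\<not> (i \<in> E \<and> a1 dvd (n - i))"
        proof
          assume h: "i \<in> E \<and> a1 dvd (n - i)"
          have "i \<le> n" using that by simp
          then have "n mod a1 = i mod a1" using h mod_eq_dvd_iff_nat[of i n a1] by simp
          moreover have "n mod a1 = i0 mod a1" using i0n ni0 mod_eq_dvd_iff_nat[of i0 n a1] by simp
          ultimately have "i = i0" using Euniq h k(3) unfolding i0_def by simp
          with False show False by simp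
        qed
        then show ?thesis using False unfolding T_def by auto
      qed
      have "(\<Sum>i=0..n. T i) = (\<Sum>i=0..n. if i = i0 then 1 else 0)" by (rule sum.cong) (simp_all add: Ti)
      also have "\<dots> = 1" using i0n by simp
      finally show ?thesis using True by (simp add: H_def)
    next
      case False
      have "T i = 0" if "i \<in> {0..n}" for i
      proof (rule ccontr)
        assume "T i \<noteq> 0"
        then have h: "i \<in> E" "a1 dvd (n - i)" "(n - i) div a1 \<in> S1" unfolding T_def by (auto split: if_splits)
        have "a1 * ((n - i) div a1) = n - i" using h(2) by simp
        then have "n \<in> S" using Schar h that by (intro Schar[THEN iffD2] bexI[of _ "(n - i) div a1"]) auto
        with False show False by simp
      qed
      then show ?thesis using False by (simp add: H_def)
    qed
    finally show "(H E * K) $ n = H S $ n" .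
  qed
  have prod: "semigroup_P M * D = semigroup_P S"
  proof -
    have "semigroup_P M * D = (1 - fps_X) * (((1 - fps_X ^ a1) * H M) * K)"
      by (simp add: semigroup_P_H DK algebra_simps)
    also have "\<dots> = semigroup_P S" by (simp add: HE HS semigroup_P_H)
    finally show ?thesis .
  qed
  have "D $ 0 = 1" unfolding D_def using S10 by (simp add: semigroup_P_nth)
  then have "D \<noteq> 0" by auto
  then have "semigroup_P S / D = semigroup_P M" using prod[symmetric] by simp
  then show ?thesis using partA[OF M0 finM] unfolding S_def D_def by simp
qed

theorem corollary6:
  fixes S1 S2 :: "nat set" and a1 a2 :: nat
  assumes "numerical_semigroup S1" and "numerical_semigroup S2"
    and "a1 > 0" and "a2 > 0" and "coprime a1 a2"
    and "a2 \<in> S1" and "a1 \<in> S2"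
  shows "\<forall>(Si, ai) \<in> {(S1, a1), (S2, a2)}.
           \<exists>q :: real poly.
             fps_of_poly q = semigroup_P (gluing a1 S1 a2 S2) / (semigroup_P Si oo (fps_X ^ ai))
             \<and> poly q 0 = 1 \<and> lead_coeff q = 1 \<and> alternating_coeffs q"
proof -
  have c2: "coprime a2 a1" using assms(5) by (simp add: coprime_commute)
  note m1 = main[OF assms]
  note m2 = main[OF assms(2,1,4,3) c2 assms(7,6)]
  show ?thesis using m1 m2 by (simp add: gluing_commute[of a2 S2 a1 S1])
qed

end
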